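(* Let $X$ be a locally compact space and $K\subset X$ quasi-compact. Then $L=\{S\in\mathcal{H}X: S\cap K\neq\emptyset\}$ is compact. The space $\mathcal{H}X$ is locally compact, and it is $\sigma$-compact if $X$ is $\sigma$-compact.
   Context: Quasi-compact: every open cover has a finite subcover; compact: quasi-compact Hausdorff; locally compact: every point has a compact neighbourhood (not necessarily Hausdorff); $\sigma$-compact: countable union of compact sets. $\mathcal{H}X$ is the set of nonempty $S\subset X$ such that for every finite family $(V_i)$ of open sets with $S\cap V_i\neq\emptyset$ for all $i$, $\bigcap_iV_i\neq\emptyset$. It is topologized as a subspace of $\hat{\mathcal{H}}X=\mathcal{H}X\cup\{\emptyset\}$, whose topology is generated by the sets $\{S: S\cap V\neq\emptyset\}$ ($V$ open in $X$) and $\{S: S\cap Q=\emptyset\}$ ($Q$ quasi-compact in $X$). *)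

theory Defs
  imports "HOL-Analysis.Analysis"
begin

text \<open>Paper's convention: "compact" = quasi-compact and Hausdorff (as a subspace).
  Library \<open>compactin\<close> is quasi-compactness.\<close>
definition hcompactin :: "'a topology \<Rightarrow> 'a set \<Rightarrow> bool" where
  "hcompactin X K \<longleftrightarrow> compactin X K \<and> Hausdorff_space (subtopology X K)"

definition lc_space :: "'a topology \<Rightarrow> bool" where
  "lc_space X \<longleftrightarrow> (\<forall>x\<in>topspace X. \<exists>U N. openin X U \<and> x \<in> U \<and> U \<subseteq> N \<and> hcompactin X N)"

definition sigma_compact_space :: "'a topology \<Rightarrow> bool" where
  "sigma_compact_space X \<longleftrightarrow>
     (\<exists>\<F>. countable \<F> \<and> (\<forall>K\<in>\<F>. hcompactin X K) \<and> \<Union>\<F> = topspace X)"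

definition HX :: "'a topology \<Rightarrow> 'a set set" where
  "HX X = {S. S \<noteq> {} \<and> S \<subseteq> topspace X \<and>
      (\<forall>\<V>. finite \<V> \<and> (\<forall>V\<in>\<V>. openin X V \<and> S \<inter> V \<noteq> {})
            \<longrightarrow> topspace X \<inter> \<Inter>\<V> \<noteq> {})}"

definition HXhat_top :: "'a topology \<Rightarrow> 'a set topology" where
  "HXhat_top X = topology_generated_by
     ({{S \<in> insert {} (HX X). S \<inter> V \<noteq> {}} | V. openin X V} \<union>
      {{S \<in> insert {} (HX X). S \<inter> Q = {}} | Q. compactin X Q})"

definition HX_top :: "'a topology \<Rightarrow> 'a set topology" where
  "HX_top X = subtopology (HXhat_top X) (HX X)"

end

theory Submission
  imports Defs
begin

lemma ultra_exists:
  fixes C :: "'b set set"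
  assumes fip: "\<And>F. finite F \<Longrightarrow> F \<subseteq> C \<Longrightarrow> \<Inter>F \<noteq> {}"
  shows "\<exists>F. F \<noteq> bot \<and> (\<forall>A\<in>C. eventually (\<lambda>x. x \<in> A) F) \<and>
             (\<forall>P. eventually P F \<or> eventually (\<lambda>x. \<not> P x) F)"
proof -
  define fp where "fp M \<longleftrightarrow> (\<forall>F. finite F \<and> F \<subseteq> M \<longrightarrow> \<Inter>F \<noteq> {})" for M :: "'b set set"
  define AA where "AA = {M. C \<subseteq> M \<and> fp M}"
  have "\<forall>Ch\<in>chains AA. \<exists>U\<in>AA. \<forall>X\<in>Ch. X \<subseteq> U"
  proof
    fix Ch assume Ch: "Ch \<in> chains AA"
    show "\<exists>U\<in>AA. \<forall>X\<in>Ch. X \<subseteq> U"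
    proof (cases "Ch = {}")
      case True
      then show ?thesis using fip by (auto simp: AA_def fp_def)
    next
      case False
      have "\<Union>Ch \<in> AA"
        unfolding AA_def fp_def
      proof (intro CollectI conjI allI impI)
        show "C \<subseteq> \<Union>Ch" using False Ch by (auto simp: AA_def chains_def)
        fix F assume F: "finite F \<and> F \<subseteq> \<Union>Ch"
        have sc: "subset.chain AA Ch" using Ch by (simp add: chains_alt_def)
        obtain B where "B \<in> Ch" "F \<subseteq> B"
          using finite_subset_Union_chain[OF _ _ False sc] F by metis
        then show "\<Inter>F \<noteq> {}" using Ch F by (auto simp: chains_def AA_def fp_def)
      qed
      then show ?thesis by blast
    qed
  qed
  from Zorn_Lemma2[OF this] obtain M where M: "M \<in> AA" and max: "\<And>X. X \<in> AA \<Longrightarrow> M \<subseteq> X \<Longrightarrow> X = M"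
    by blast
  define F where "F = (INF A\<in>M. principal A)"
  have ev: "eventually P F \<longleftrightarrow> (\<exists>X\<subseteq>M. finite X \<and> (\<forall>x\<in>\<Inter>X. P x))" for P
  proof -
    have e: "eventually P (INF A\<in>X. principal A) \<longleftrightarrow> (\<forall>x\<in>\<Inter>X. P x)" if "finite X" for X
    proof -
      have "(INF A\<in>X. principal A) = principal (\<Inter>X)"
        using INF_principal_finite[OF that, of "\<lambda>A. A"] by (metis image_ident)
      then show ?thesis by (simp add: eventually_principal)
    qed
    have "eventually P F \<longleftrightarrow> (\<exists>X\<subseteq>M. finite X \<and> eventually P (INF A\<in>X. principal A))"
      unfolding F_def by (rule eventually_INF)
    also have "\<dots> \<longleftrightarrow> (\<exists>X\<subseteq>M. finite X \<and> (\<forall>x\<in>\<Inter>X. P x))"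
      using e by (meson)
    finally show ?thesis .
  qed
  have "F \<noteq> bot"
  proof
    assume "F = bot"
    then have "eventually (\<lambda>x. False) F" by simp
    then obtain X where "X \<subseteq> M" "finite X" "\<Inter>X = {}" unfolding ev by blast
    with M show False by (auto simp: AA_def fp_def)
  qed
  moreover have "\<forall>A\<in>C. eventually (\<lambda>x. x \<in> A) F"
  proof
    fix A assume "A \<in> C"
    then have "{A} \<subseteq> M" using M by (auto simp: AA_def)
    then show "eventually (\<lambda>x. x \<in> A) F" unfolding ev by (intro exI[of _ "{A}"]) auto
  qed
  moreover have "eventually P F \<or> eventually (\<lambda>x. \<not> P x) F" for P
  proof (cases "{x. P x} \<in> M")
    case True
    then show ?thesis unfolding ev by (intro disjI1 exI[of _ "{{x. P x}}"]) auto
  next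
    case False
    have "insert {x. P x} M \<notin> AA"
      using max[of "insert {x. P x} M"] False by auto
    then have "\<not> fp (insert {x. P x} M)" using M by (auto simp: AA_def)
    then obtain G where G: "finite G" "G \<subseteq> insert {x. P x} M" "\<Inter>G = {}"
      unfolding fp_def by auto
    have "G - {{x. P x}} \<subseteq> M" "finite (G - {{x. P x}})" using G by auto
    moreover have "\<forall>x\<in>\<Inter>(G - {{x. P x}}). \<not> P x"
      using G(3) by auto
    ultimately show ?thesis unfolding ev by blast
  qed
  ultimately show ?thesis by blast
qed


lemma HX_sub: "S \<in> HX X \<Longrightarrow> S \<subseteq> topspace X \<and> S \<noteq> {}"
  by (simp add: HX_def)

lemma HX_prop:
  "S \<in> HX X \<Longrightarrow> finite \<V> \<Longrightarrow> \<forall>V\<in>\<V>. openin X V \<and> S \<inter> V \<noteq> {} \<Longrightarrow> topspace X \<inter> \<Inter>\<V> \<noteq> {}"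
  unfolding HX_def by blast

lemma topspace_HXhat: "topspace (HXhat_top X) = insert {} (HX X)"
proof -
  have "{S \<in> insert {} (HX X). S \<inter> {} = {}} \<in>
      ({{S \<in> insert {} (HX X). S \<inter> V \<noteq> {}} | V. openin X V} \<union>
      {{S \<in> insert {} (HX X). S \<inter> Q = {}} | Q. compactin X Q})"
    by blast
  then show ?thesis unfolding HXhat_top_def topology_generated_by_topspace by blast
qed

lemma topspace_HX: "topspace (HX_top X) = HX X"
  unfolding HX_top_def topspace_subtopology topspace_HXhat by blast

lemma open_meet: "openin X V \<Longrightarrow> openin (HX_top X) {S \<in> HX X. S \<inter> V \<noteq> {}}"
  unfolding HX_top_def openin_subtopology
proof (intro exI[of _ "{S \<in> insert {} (HX X). S \<inter> V \<noteq> {}}"] conjI)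
  assume "openin X V"
  then show "openin (HXhat_top X) {S \<in> insert {} (HX X). S \<inter> V \<noteq> {}}"
    unfolding HXhat_top_def openin_topology_generated_by_iff
    by (intro generate_topology_on.Basis) blast
qed blast

lemma open_avoid: "compactin X Q \<Longrightarrow> openin (HX_top X) {S \<in> HX X. S \<inter> Q = {}}"
  unfolding HX_top_def openin_subtopology
proof (intro exI[of _ "{S \<in> insert {} (HX X). S \<inter> Q = {}}"] conjI)
  assume "compactin X Q"
  then show "openin (HXhat_top X) {S \<in> insert {} (HX X). S \<inter> Q = {}}"
    unfolding HXhat_top_def openin_topology_generated_by_iff
    by (intro generate_topology_on.Basis) blast
qed blast

lemma HX_closed:
  assumes lc: "lc_space X" and S: "S \<in> HX X"
  shows "closedin X S"
  unfolding closedin_def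
proof
  show "S \<subseteq> topspace X" using HX_sub[OF S] by blast
  show "openin X (topspace X - S)"
  proof (subst openin_subopen, intro ballI)
    fix x assume x: "x \<in> topspace X - S"
    obtain U N where U: "openin X U" "x \<in> U" "U \<subseteq> N" "hcompactin X N"
      using lc x unfolding lc_space_def by blast
    have HU: "Hausdorff_space (subtopology X U)"
    proof -
      have "Hausdorff_space (subtopology (subtopology X N) U)"
        using U(4) Hausdorff_space_subtopology unfolding hcompactin_def by blast
      moreover have "subtopology (subtopology X N) U = subtopology X U"
        using U(3) by (simp add: subtopology_subtopology Int_absorb1 inf_commute)
      ultimately show ?thesis by simp
    qed
    have Usub: "U \<subseteq> topspace X" using U(1) openin_subset by blast
    have sep: "\<exists>A B. openin X A \<and> openin X B \<and> a \<in> A \<and> b \<in> B \<and> A \<subseteq> U \<and> B \<subseteq> U \<and> disjnt A B"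
      if ab: "a \<in> U" "b \<in> U" "a \<noteq> b" for a b
    proof -
      have "a \<in> topspace (subtopology X U)" "b \<in> topspace (subtopology X U)"
        using ab Usub by auto
      then have "\<exists>A B. openin (subtopology X U) A \<and> openin (subtopology X U) B \<and> a \<in> A \<and> b \<in> B \<and> disjnt A B"
        using HU ab(3) unfolding Hausdorff_space_def by blast
      then obtain A B where AB: "openin (subtopology X U) A" "openin (subtopology X U) B"
          "a \<in> A" "b \<in> B" "disjnt A B"
        by blast
      have "openin X A \<and> A \<subseteq> U" "openin X B \<and> B \<subseteq> U"
        using openin_open_subtopology[OF U(1)] AB(1,2) by blast+
      then show ?thesis using AB(3-5) by (intro exI[of _ A] exI[of _ B] conjI) simp_all
    qed
    have one: "a = b" if ab: "a \<in> S \<inter> U" "b \<in> S \<inter> U" for a b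
    proof (rule ccontr)
      assume "a \<noteq> b"
      moreover have "a \<in> U" "b \<in> U" using ab by auto
      ultimately obtain A B where AB: "openin X A" "openin X B" "a \<in> A" "b \<in> B" "disjnt A B"
        using sep[of a b] by blast
      have "topspace X \<inter> \<Inter>{A, B} \<noteq> {}"
        by (rule HX_prop[OF S]) (use AB ab in auto)
      then show False using AB(5) by (auto simp: disjnt_def)
    qed
    show "\<exists>T. openin X T \<and> x \<in> T \<and> T \<subseteq> topspace X - S"
    proof (cases "S \<inter> U = {}")
      case True
      then show ?thesis using U Usub by (intro exI[of _ U]) auto
    next
      case False
      then obtain t where t: "t \<in> S \<inter> U" by blast
      then have "t \<noteq> x" using x by auto
      then obtain A B where AB: "openin X A" "openin X B" "x \<in> A" "t \<in> B" "A \<subseteq> U" "B \<subseteq> U" "disjnt A B"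
        using sep[of x t] t U(2) by blast
      have "A \<inter> S = {}"
      proof (rule ccontr)
        assume "A \<inter> S \<noteq> {}"
        then obtain s where "s \<in> A" "s \<in> S" by blast
        then have "s = t" using one[of s t] t AB(5) by blast
        then show False using AB \<open>s \<in> A\<close> by (auto simp: disjnt_def)
      qed
      then show ?thesis using AB Usub by (intro exI[of _ A]) auto
    qed
  qed
qed

lemma nbhd_base:
  assumes lc: "lc_space X" and G: "openin X G" "x \<in> G"
  shows "\<exists>V Q. openin X V \<and> compactin X Q \<and> x \<in> V \<and> V \<subseteq> Q \<and> Q \<subseteq> G"
proof -
  have "x \<in> topspace X" using G openin_subset by blast
  then obtain U N where U: "openin X U" "x \<in> U" "U \<subseteq> N" "hcompactin X N"
    using lc unfolding lc_space_def by blast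
  define Y where "Y = subtopology X N"
  have "compact_space Y" "Hausdorff_space Y"
    using U(4) compact_space_subtopology unfolding hcompactin_def Y_def by blast+
  then have "regular_space Y" by (rule compact_Hausdorff_imp_regular_space)
  then have nb: "neighbourhood_base_of (closedin Y) Y" by (simp add: neighbourhood_base_of_closedin)
  have oGU: "openin X (G \<inter> U)" using G(1) U(1) by (rule openin_Int)
  have eGU: "G \<inter> U = (G \<inter> U) \<inter> N" using U(3) by blast
  have "openin Y (G \<inter> U)"
    unfolding Y_def openin_subtopology
    by (rule exI[of _ "G \<inter> U"]) (rule conjI[OF oGU eGU])
  moreover have "x \<in> G \<inter> U" using G(2) U(2) by blast
  ultimately have "\<exists>W C. openin Y W \<and> closedin Y C \<and> x \<in> W \<and> W \<subseteq> C \<and> C \<subseteq> G \<inter> U"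
    using nb[unfolded neighbourhood_base_of, rule_format, of "G \<inter> U" x] by blast
  then obtain W C where WC: "openin Y W" "closedin Y C" "x \<in> W" "W \<subseteq> C" "C \<subseteq> G \<inter> U"
    by blast
  obtain Op where O: "openin X Op" "W = Op \<inter> N" using WC(1) unfolding Y_def openin_subtopology by blast
  have "compactin Y C" using closedin_compact_space[OF \<open>compact_space Y\<close> WC(2)] .
  then have "compactin X C" unfolding Y_def compactin_subtopology by blast
  moreover have "openin X (Op \<inter> U)" using O U by blast
  ultimately show ?thesis using WC O U
    by (intro exI[of _ "Op \<inter> U"] exI[of _ C]) auto
qed

lemma sep1:
  assumes lc: "lc_space X" and S: "S \<in> HX X" and T: "T \<in> HX X" and x: "x \<in> S" "x \<notin> T"
  shows "\<exists>A B. openin (HX_top X) A \<and> openin (HX_top X) B \<and> S \<in> A \<and> T \<in> B \<and> disjnt A B"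
proof -
  have "closedin X T" by (rule HX_closed[OF lc T])
  then have "openin X (topspace X - T)" by (simp add: closedin_def)
  moreover have "x \<in> topspace X - T" using x HX_sub[OF S] by auto
  ultimately obtain V Q where VQ: "openin X V" "compactin X Q" "x \<in> V" "V \<subseteq> Q" "Q \<subseteq> topspace X - T"
    using nbhd_base[OF lc] by metis
  show ?thesis
    apply (rule exI[of _ "{R \<in> HX X. R \<inter> V \<noteq> {}}"], rule exI[of _ "{R \<in> HX X. R \<inter> Q = {}}"])
    using open_meet[OF VQ(1)] open_avoid[OF VQ(2)] VQ S T x by (auto simp: disjnt_def)
qed

lemma Hausdorff_HX:
  assumes lc: "lc_space X"
  shows "Hausdorff_space (HX_top X)"
  unfolding Hausdorff_space_def topspace_HX
proof (intro allI impI)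
  fix S T assume ST: "S \<in> HX X \<and> T \<in> HX X \<and> S \<noteq> T"
  then obtain x where "(x \<in> S \<and> x \<notin> T) \<or> (x \<in> T \<and> x \<notin> S)" by blast
  then show "\<exists>U V. openin (HX_top X) U \<and> openin (HX_top X) V \<and> S \<in> U \<and> T \<in> V \<and> disjnt U V"
  proof
    assume "x \<in> S \<and> x \<notin> T"
    then show ?thesis using sep1[OF lc] ST by blast
  next
    assume "x \<in> T \<and> x \<notin> S"
    then obtain A B where "openin (HX_top X) A" "openin (HX_top X) B" "T \<in> A" "S \<in> B" "disjnt A B"
      using sep1[OF lc, of T S x] ST by blast
    then show ?thesis using disjnt_sym by blast
  qed
qed

lemma compact_L:
  assumes K: "compactin X K"
  shows "compactin (HX_top X) {S \<in> HX X. S \<inter> K \<noteq> {}}"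
proof -
  define L where "L = {S \<in> HX X. S \<inter> K \<noteq> {}}"
  have "L \<subseteq> topspace (HX_top X)" unfolding L_def topspace_HX by blast
  moreover have main: "\<exists>\<F>. finite \<F> \<and> \<F> \<subseteq> \<U> \<and> L \<subseteq> \<Union>\<F>"
    if opn: "\<forall>U\<in>\<U>. openin (HX_top X) U" and cov: "L \<subseteq> \<Union>\<U>" for \<U>
  proof (rule ccontr)
    assume nf: "\<not> (\<exists>\<F>. finite \<F> \<and> \<F> \<subseteq> \<U> \<and> L \<subseteq> \<Union>\<F>)"
    define \<C> where "\<C> = insert L ((\<lambda>U. L - U) ` \<U>)"
    have fip: "\<Inter>\<F> \<noteq> {}" if "finite \<F>" "\<F> \<subseteq> \<C>" for \<F>
    proof -
      have "\<F> - {L} \<subseteq> (\<lambda>U. L - U) ` \<U>" "finite (\<F> - {L})" using that unfolding \<C>_def by auto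
      then obtain \<U>' where U': "\<U>' \<subseteq> \<U>" "finite \<U>'" "\<F> - {L} = (\<lambda>U. L - U) ` \<U>'"
        by (meson finite_subset_image)
      then obtain S where "S \<in> L" "S \<notin> \<Union>\<U>'" using nf by blast
      then have "S \<in> \<Inter>\<F>"
      proof -
        have "S \<in> A" if "A \<in> \<F>" for A
        proof (cases "A = L")
          case True then show ?thesis using \<open>S \<in> L\<close> by simp
        next
          case False
          then have "A \<in> (\<lambda>U. L - U) ` \<U>'" using that U'(3) by blast
          then show ?thesis using \<open>S \<in> L\<close> \<open>S \<notin> \<Union>\<U>'\<close> by blast
        qed
        then show ?thesis by blast
      qed
      then show ?thesis by blast
    qed
    obtain F where Fnb: "F \<noteq> bot" and FC: "\<forall>A\<in>\<C>. eventually (\<lambda>x. x \<in> A) F"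
        and ultra: "\<And>P. eventually P F \<or> eventually (\<lambda>x. \<not> P x) F"
      using ultra_exists[of \<C>, OF fip] by blast
    have evL: "eventually (\<lambda>S. S \<in> L) F" using FC by (simp add: \<C>_def)
    have evU: "eventually (\<lambda>S. S \<in> L - U) F" if "U \<in> \<U>" for U
      using FC that by (simp add: \<C>_def)
    define T0 where "T0 = {y \<in> topspace X. \<forall>B. openin X B \<and> y \<in> B \<longrightarrow> eventually (\<lambda>S. S \<inter> B \<noteq> {}) F}"
    have Gq: "eventually (\<lambda>S. S \<inter> Q = {}) F" if Q: "compactin X Q" "Q \<inter> T0 = {}" for Q
    proof -
      have "\<forall>y\<in>Q. \<exists>B. openin X B \<and> y \<in> B \<and> eventually (\<lambda>S. S \<inter> B = {}) F"
      proof
        fix y assume y: "y \<in> Q"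
        then have "y \<in> topspace X" "y \<notin> T0" using Q compactin_subset_topspace by blast+
        then obtain B where B: "openin X B" "y \<in> B" "\<not> eventually (\<lambda>S. S \<inter> B \<noteq> {}) F"
          unfolding T0_def by blast
        then have "eventually (\<lambda>S. \<not> (S \<inter> B \<noteq> {})) F" using ultra[of "\<lambda>S. S \<inter> B \<noteq> {}"] by simp
        then show "\<exists>B. openin X B \<and> y \<in> B \<and> eventually (\<lambda>S. S \<inter> B = {}) F"
          using B by (intro exI[of _ B]) simp
      qed
      then obtain Bf where Bf: "\<And>y. y \<in> Q \<Longrightarrow> openin X (Bf y) \<and> y \<in> Bf y \<and> eventually (\<lambda>S. S \<inter> Bf y = {}) F"
        by metis
      have "\<exists>\<F>. finite \<F> \<and> \<F> \<subseteq> Bf ` Q \<and> Q \<subseteq> \<Union>\<F>"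
        using Q(1) unfolding compactin_def
        by (elim conjE allE[of _ "Bf ` Q"] impE) (use Bf in blast)+
      then obtain \<F> where "finite \<F>" "\<F> \<subseteq> Bf ` Q" "Q \<subseteq> \<Union>\<F>" by blast
      then obtain Q' where Q': "Q' \<subseteq> Q" "finite Q'" "Q \<subseteq> \<Union>(Bf ` Q')"
        by (metis finite_subset_image)
      have "eventually (\<lambda>S. \<forall>y\<in>Q'. S \<inter> Bf y = {}) F"
        by (rule eventually_ball_finite[OF Q'(2)]) (use Bf Q'(1) in blast)
      then show ?thesis by (rule eventually_mono) (use Q'(3) in blast)
    qed
    have T0K: "T0 \<inter> K \<noteq> {}"
    proof
      assume "T0 \<inter> K = {}"
      then have "eventually (\<lambda>S. S \<inter> K = {}) F" using Gq[OF K] by (simp add: Int_commute)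
      with evL have "eventually (\<lambda>S. False) F"
        by (rule eventually_elim2) (auto simp: L_def)
      then show False using Fnb by simp
    qed
    have T0HX: "T0 \<in> HX X"
      unfolding HX_def
    proof (intro CollectI conjI allI impI)
      show "T0 \<noteq> {}" using T0K by blast
      show "T0 \<subseteq> topspace X" unfolding T0_def by blast
      fix \<V> assume V: "finite \<V> \<and> (\<forall>V\<in>\<V>. openin X V \<and> T0 \<inter> V \<noteq> {})"
      have "\<forall>V\<in>\<V>. eventually (\<lambda>S. S \<inter> V \<noteq> {}) F"
      proof
        fix V assume "V \<in> \<V>"
        then obtain y where y: "y \<in> T0" "y \<in> V" "openin X V" using V by blast
        then have "\<forall>B. openin X B \<and> y \<in> B \<longrightarrow> eventually (\<lambda>S. S \<inter> B \<noteq> {}) F"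
          unfolding T0_def by simp
        then show "eventually (\<lambda>S. S \<inter> V \<noteq> {}) F" using y by simp
      qed
      then have "eventually (\<lambda>S. \<forall>V\<in>\<V>. S \<inter> V \<noteq> {}) F"
        using eventually_ball_finite[of \<V> "\<lambda>S V. S \<inter> V \<noteq> {}" F] V by simp
      with evL have evV: "eventually (\<lambda>S. S \<in> L \<and> (\<forall>V\<in>\<V>. S \<inter> V \<noteq> {})) F"
        by (rule eventually_conj)
      obtain S where S: "S \<in> L" "\<forall>V\<in>\<V>. S \<inter> V \<noteq> {}"
        using eventually_happens[OF evV] Fnb by blast
      show "topspace X \<inter> \<Inter>\<V> \<noteq> {}"
        by (rule HX_prop[of S]) (use S V in \<open>auto simp: L_def\<close>)
    qed
    have T0L: "T0 \<in> L" using T0HX T0K unfolding L_def by blast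
    have Nb: "eventually (\<lambda>S. S \<in> W) F" if W: "openin (HX_top X) W" "T0 \<in> W" for W
    proof -
      obtain W' where W': "openin (HXhat_top X) W'" "W = W' \<inter> HX X"
        using W(1) unfolding HX_top_def openin_subtopology by blast
      have gen: "generate_topology_on
          ({{S \<in> insert {} (HX X). S \<inter> V \<noteq> {}} | V. openin X V} \<union>
           {{S \<in> insert {} (HX X). S \<inter> Q = {}} | Q. compactin X Q}) W'"
        using W'(1) unfolding HXhat_top_def openin_topology_generated_by_iff .
      have "T0 \<in> W' \<longrightarrow> eventually (\<lambda>S. S \<in> W') F"
        using gen
      proof (induction rule: generate_topology_on.induct)
        case Empty
        then show ?case by simp
      next
        case (Int a b)
        then show ?case by (auto intro: eventually_conj)
      next
        case (UN K)
        show ?case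
        proof
          assume "T0 \<in> \<Union>K"
          then obtain k where "k \<in> K" "T0 \<in> k" by blast
          have "T0 \<in> k \<longrightarrow> eventually (\<lambda>S. S \<in> k) F" by (rule UN.IH[OF \<open>k \<in> K\<close>])
          then have "eventually (\<lambda>S. S \<in> k) F" using \<open>T0 \<in> k\<close> by (rule mp)
          then show "eventually (\<lambda>S. S \<in> \<Union>K) F"
            by (rule eventually_mono) (use \<open>k \<in> K\<close> in blast)
        qed
      next
        case (Basis s)
        then consider (a) V where "openin X V" "s = {S \<in> insert {} (HX X). S \<inter> V \<noteq> {}}"
          | (b) Q where "compactin X Q" "s = {S \<in> insert {} (HX X). S \<inter> Q = {}}"
          by blast
        then show ?case
        proof cases
          case a
          show ?thesis
          proof
            assume "T0 \<in> s"
            then obtain y where "y \<in> T0" "y \<in> V" using a by blast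
            then have "\<forall>B. openin X B \<and> y \<in> B \<longrightarrow> eventually (\<lambda>S. S \<inter> B \<noteq> {}) F"
              unfolding T0_def by simp
            then have "eventually (\<lambda>S. S \<inter> V \<noteq> {}) F" using a(1) \<open>y \<in> V\<close> by simp
            with evL show "eventually (\<lambda>S. S \<in> s) F"
              by (rule eventually_elim2) (auto simp: a(2) L_def)
          qed
        next
          case b
          show ?thesis
          proof
            assume "T0 \<in> s"
            then have "Q \<inter> T0 = {}" using b by blast
            then have "eventually (\<lambda>S. S \<inter> Q = {}) F" by (rule Gq[OF b(1)])
            with evL show "eventually (\<lambda>S. S \<in> s) F"
              by (rule eventually_elim2) (auto simp: b(2) L_def)
          qed
        qed
      qed
      moreover have "T0 \<in> W'" using W(2) W'(2) by blast
      ultimately have "eventually (\<lambda>S. S \<in> W') F" by (rule mp)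
      with evL show ?thesis
        by (rule eventually_elim2) (auto simp: W'(2) L_def)
    qed
    obtain U where U: "U \<in> \<U>" "T0 \<in> U" using cov T0L by blast
    have "openin (HX_top X) U" using opn U(1) by blast
    then have "eventually (\<lambda>S. S \<in> U) F" by (rule Nb[OF _ U(2)])
    with evU[OF U(1)] have "eventually (\<lambda>S. False) F"
      by (rule eventually_elim2) auto
    then show False using Fnb by simp
  qed
  ultimately have "compactin (HX_top X) L" unfolding compactin_def
    by (intro conjI allI impI) (simp, rule main, simp_all)
  then show ?thesis unfolding L_def .
qed

theorem proposition3p7:
  fixes X :: "'a topology" and K :: "'a set"
  assumes "lc_space X" and "compactin X K"
  shows "hcompactin (HX_top X) {S \<in> HX X. S \<inter> K \<noteq> {}} \<and>
         lc_space (HX_top X) \<and>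
         (sigma_compact_space X \<longrightarrow> sigma_compact_space (HX_top X))"
proof -
  have H: "Hausdorff_space (HX_top X)" by (rule Hausdorff_HX[OF assms(1)])
  have hc: "hcompactin (HX_top X) {S \<in> HX X. S \<inter> Q \<noteq> {}}" if "compactin X Q" for Q
    unfolding hcompactin_def using compact_L[OF that] Hausdorff_space_subtopology[OF H] by blast
  have lc: "lc_space (HX_top X)"
    unfolding lc_space_def topspace_HX
  proof
    fix S assume S: "S \<in> HX X"
    then obtain x where x: "x \<in> S" "x \<in> topspace X" using HX_sub by blast
    obtain V Q where VQ: "openin X V" "compactin X Q" "x \<in> V" "V \<subseteq> Q" "Q \<subseteq> topspace X"
      using nbhd_base[OF assms(1) openin_topspace x(2)] by blast
    show "\<exists>U N. openin (HX_top X) U \<and> S \<in> U \<and> U \<subseteq> N \<and> hcompactin (HX_top X) N"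
    proof (intro exI conjI)
      show "openin (HX_top X) {R \<in> HX X. R \<inter> V \<noteq> {}}" by (rule open_meet[OF VQ(1)])
      show "S \<in> {R \<in> HX X. R \<inter> V \<noteq> {}}" using S x(1) VQ(3) by blast
      show "{R \<in> HX X. R \<inter> V \<noteq> {}} \<subseteq> {R \<in> HX X. R \<inter> Q \<noteq> {}}" using VQ(4) by blast
      show "hcompactin (HX_top X) {R \<in> HX X. R \<inter> Q \<noteq> {}}" by (rule hc[OF VQ(2)])
    qed
  qed
  have sc: "sigma_compact_space (HX_top X)" if sX: "sigma_compact_space X"
  proof -
    have "\<exists>\<F>. countable \<F> \<and> (\<forall>K\<in>\<F>. hcompactin X K) \<and> \<Union>\<F> = topspace X"
      using sX unfolding sigma_compact_space_def .
    then obtain \<F> where F0: "countable \<F> \<and> (\<forall>K\<in>\<F>. hcompactin X K) \<and> \<Union>\<F> = topspace X" ..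
    have F1: "countable \<F>" using F0 by (rule conjunct1)
    have F2: "\<forall>K\<in>\<F>. hcompactin X K" using F0 by (rule conjunct1[OF conjunct2])
    have F3: "\<Union>\<F> = topspace X" using F0 by (rule conjunct2[OF conjunct2])
    note F = F1 F2 F3
    show ?thesis
      unfolding sigma_compact_space_def topspace_HX
    proof (intro exI[of _ "(\<lambda>K. {S \<in> HX X. S \<inter> K \<noteq> {}}) ` \<F>"] conjI)
      show "countable ((\<lambda>K. {S \<in> HX X. S \<inter> K \<noteq> {}}) ` \<F>)" using F(1) by simp
      show "\<forall>N\<in>(\<lambda>K. {S \<in> HX X. S \<inter> K \<noteq> {}}) ` \<F>. hcompactin (HX_top X) N"
      proof
        fix N assume "N \<in> (\<lambda>K. {S \<in> HX X. S \<inter> K \<noteq> {}}) ` \<F>"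
        then obtain K where K: "K \<in> \<F>" "N = {S \<in> HX X. S \<inter> K \<noteq> {}}" by blast
        have "compactin X K" using F(2) K(1) unfolding hcompactin_def by blast
        then show "hcompactin (HX_top X) N" unfolding K(2) by (rule hc)
      qed
      show "\<Union>((\<lambda>K. {S \<in> HX X. S \<inter> K \<noteq> {}}) ` \<F>) = HX X"
      proof
        show "HX X \<subseteq> \<Union>((\<lambda>K. {S \<in> HX X. S \<inter> K \<noteq> {}}) ` \<F>)"
        proof
          fix S assume S: "S \<in> HX X"
          then obtain x where "x \<in> S" "x \<in> topspace X" using HX_sub by blast
          then have "x \<in> \<Union>\<F>" using F(3) by simp
          then obtain K where "K \<in> \<F>" "x \<in> K" by blast
          then show "S \<in> \<Union>((\<lambda>K. {S \<in> HX X. S \<inter> K \<noteq> {}}) ` \<F>)" using S \<open>x \<in> S\<close> by blast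
        qed
      next
        show "\<Union>((\<lambda>K. {S \<in> HX X. S \<inter> K \<noteq> {}}) ` \<F>) \<subseteq> HX X" by auto
      qed
    qed
  qed
  show ?thesis using hc[OF assms(2)] lc sc by blast
qed

end
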